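(* Let $\nu$ be a measure on $\mathcal B(\mathbb R)^U$ satisfying $\int_{\mathbb R^U}1\wedge|\pi_u(x)|^2\,\nu(dx)<\infty$ for all $u\in U$. Then $\nu$ does not charge zero if and only if $\nu$ is $\sigma$-finite and for every $A\in\mathcal B(\mathbb R)^U$ there exists a countable $U_A\subset U$ such that $\nu(A)=\nu(A\setminus\pi_{U_A}^{-1}(0^{U_A}))$.
   Context: $U$ is a non-empty index set, $\mathcal B(\mathbb R)^U$ the cylindrical (product) $\sigma$-algebra on $\mathbb R^U$, $\pi_V\colon\mathbb R^U\to\mathbb R^V$ the coordinate projection for $V\subset U$ ($\pi_u$ for $V=\{u\}$), $0^V$ the zero element of $\mathbb R^V$. A measure $\nu$ on $\mathcal B(\mathbb R)^U$ does not charge zero if there exists a countable $U_0\subset U$ with $\nu(\pi_{U_0}^{-1}(0^{U_0}))=0$. *)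

theory Defs
  imports "HOL-Analysis.Analysis"
begin

text \<open>Cylindrical sigma-algebra on R^U: the product measurable space PiM U (\<lambda>_. borel).
  Preimage of the zero element of R^V under the projection pi_V.\<close>
definition zero_cyl :: "'u set \<Rightarrow> ('u \<Rightarrow> real) measure \<Rightarrow> ('u \<Rightarrow> real) set" where
  "zero_cyl V M = {x \<in> space M. \<forall>v\<in>V. x v = 0}"

definition does_not_charge_zero :: "'u set \<Rightarrow> ('u \<Rightarrow> real) measure \<Rightarrow> bool" where
  "does_not_charge_zero U M \<longleftrightarrow>
     (\<exists>U0. U0 \<subseteq> U \<and> countable U0 \<and> emeasure M (zero_cyl U0 M) = 0)"

end

theory Submission
  imports Defs
begin

lemma zero_cyl_sets:
  assumes "countable V" "V \<subseteq> U" "sets \<nu> = sets (PiM U (\<lambda>_. borel :: real measure))"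
  shows "zero_cyl V \<nu> \<in> sets \<nu>"
proof -
  have m: "(\<lambda>x. x v) \<in> borel_measurable \<nu>" if "v \<in> U" for v
    using measurable_component_singleton[OF that, of "\<lambda>_. borel :: real measure"]
      measurable_cong_sets[OF assms(3) refl] by blast
  have s: "{x\<in>space \<nu>. x v = 0} \<in> sets \<nu>" if "v \<in> U" for v
    using m[OF that] by measurable
  show ?thesis
  proof (cases "V = {}")
    case True
    then show ?thesis by (simp add: zero_cyl_def)
  next
    case False
    have "zero_cyl V \<nu> = (\<Inter>v\<in>V. {x\<in>space \<nu>. x v = 0})"
      using False by (auto simp: zero_cyl_def)
    moreover have "(\<Inter>v\<in>V. {x\<in>space \<nu>. x v = 0}) \<in> sets \<nu>"
      using False assms(1,2) s by (intro sets.countable_INT') auto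
    ultimately show ?thesis by simp
  qed
qed

theorem lemmaA2:
  fixes U :: "'u set" and \<nu> :: "('u \<Rightarrow> real) measure"
  assumes "U \<noteq> {}"
    and "sets \<nu> = sets (PiM U (\<lambda>_. borel))"
    and "\<And>u. u \<in> U \<Longrightarrow> (\<integral>\<^sup>+ x. ennreal (min 1 (\<bar>x u\<bar>\<^sup>2)) \<partial>\<nu>) < \<infinity>"
  shows "does_not_charge_zero U \<nu> \<longleftrightarrow>
    (sigma_finite_measure \<nu> \<and>
     (\<forall>A \<in> sets \<nu>. \<exists>UA. UA \<subseteq> U \<and> countable UA \<and>
        emeasure \<nu> A = emeasure \<nu> (A - zero_cyl UA \<nu>)))"
proof
  assume "does_not_charge_zero U \<nu>"
  then obtain U0 where U0: "U0 \<subseteq> U" "countable U0" "emeasure \<nu> (zero_cyl U0 \<nu>) = 0"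
    by (auto simp: does_not_charge_zero_def)
  define Z where "Z = zero_cyl U0 \<nu>"
  have Zs: "Z \<in> sets \<nu>" unfolding Z_def using zero_cyl_sets[OF U0(2,1) assms(2)] .
  have Z0: "emeasure \<nu> Z = 0" using U0 Z_def by simp
  have m: "(\<lambda>x. x v) \<in> borel_measurable \<nu>" if "v \<in> U" for v
    using measurable_component_singleton[OF that, of "\<lambda>_. borel :: real measure"]
      measurable_cong_sets[OF assms(2) refl] by blast
  define B where "B = (\<lambda>(u,n::nat). {x\<in>space \<nu>. 1 / (real (Suc n))\<^sup>2 \<le> min 1 (\<bar>x u\<bar>\<^sup>2)})"
  have Bs: "B (u,n) \<in> sets \<nu>" if "u \<in> U" for u n
  proof -
    have "(\<lambda>x. min 1 (\<bar>x u\<bar>\<^sup>2)) \<in> borel_measurable \<nu>" using m[OF that] by measurable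
    then show ?thesis unfolding B_def prod.case by (intro borel_measurable_le) auto
  qed
  have Bfin: "emeasure \<nu> (B (u,n)) \<noteq> \<infinity>" if "u \<in> U" for u n
  proof -
    define c where "c = 1 / (real (Suc n))\<^sup>2"
    have c: "c > 0" unfolding c_def by simp
    have "ennreal c * emeasure \<nu> (B (u,n)) = (\<integral>\<^sup>+ x. ennreal c * indicator (B (u,n)) x \<partial>\<nu>)"
      using Bs[OF that] by (simp add: nn_integral_cmult_indicator)
    also have "\<dots> \<le> (\<integral>\<^sup>+ x. ennreal (min 1 (\<bar>x u\<bar>\<^sup>2)) \<partial>\<nu>)"
      by (intro nn_integral_mono) (auto simp: B_def c_def indicator_def)
    also have "\<dots> < \<infinity>" using assms(3)[OF that] .
    finally have "ennreal c * emeasure \<nu> (B (u,n)) < \<infinity>" .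
    then show ?thesis using c by (auto simp: ennreal_mult_less_top)
  qed
  have cover: "space \<nu> = Z \<union> (\<Union>p\<in>U0 \<times> UNIV. B p)"
  proof (intro equalityI subsetI)
    fix x assume x: "x \<in> space \<nu>"
    show "x \<in> Z \<union> (\<Union>p\<in>U0 \<times> UNIV. B p)"
    proof (cases "x \<in> Z")
      case False
      then obtain u where u: "u \<in> U0" "x u \<noteq> 0" using x by (auto simp: Z_def zero_cyl_def)
      then obtain n where n: "inverse (real (Suc n)) < \<bar>x u\<bar>"
        using reals_Archimedean[of "\<bar>x u\<bar>"] u by auto
      have "(1 / real (Suc n))\<^sup>2 \<le> \<bar>x u\<bar>\<^sup>2"
        using n by (intro power_mono) (auto simp: divide_inverse)
      moreover have "1 / (real (Suc n))\<^sup>2 \<le> 1" by simp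
      ultimately have "x \<in> B (u,n)" using x by (auto simp: B_def power_divide)
      then show ?thesis using u by blast
    qed simp
  next
    fix x assume "x \<in> Z \<union> (\<Union>p\<in>U0 \<times> UNIV. B p)"
    then show "x \<in> space \<nu>" by (auto simp: Z_def zero_cyl_def B_def)
  qed
  have "sigma_finite_measure \<nu>"
  proof
    show "\<exists>A. countable A \<and> A \<subseteq> sets \<nu> \<and> \<Union> A = space \<nu> \<and> (\<forall>a\<in>A. emeasure \<nu> a \<noteq> \<infinity>)"
      apply (rule exI[of _ "insert Z (B ` (U0 \<times> UNIV))"])
      using U0(1,2) Zs Z0 Bs Bfin cover by auto
  qed
  moreover have "\<forall>A \<in> sets \<nu>. \<exists>UA. UA \<subseteq> U \<and> countable UA \<and>
        emeasure \<nu> A = emeasure \<nu> (A - zero_cyl UA \<nu>)"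
  proof
    fix A assume A: "A \<in> sets \<nu>"
    have "emeasure \<nu> (A - Z) = emeasure \<nu> A"
      by (rule emeasure_Diff_null_set[OF _ A]) (use Zs Z0 in \<open>auto simp: null_sets_def\<close>)
    then show "\<exists>UA. UA \<subseteq> U \<and> countable UA \<and> emeasure \<nu> A = emeasure \<nu> (A - zero_cyl UA \<nu>)"
      using U0 Z_def by auto
  qed
  ultimately show "sigma_finite_measure \<nu> \<and> (\<forall>A \<in> sets \<nu>. \<exists>UA. UA \<subseteq> U \<and> countable UA \<and>
        emeasure \<nu> A = emeasure \<nu> (A - zero_cyl UA \<nu>))" by blast
next
  assume H: "sigma_finite_measure \<nu> \<and> (\<forall>A \<in> sets \<nu>. \<exists>UA. UA \<subseteq> U \<and> countable UA \<and>
        emeasure \<nu> A = emeasure \<nu> (A - zero_cyl UA \<nu>))"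
  then obtain A :: "nat \<Rightarrow> _" where A: "range A \<subseteq> sets \<nu>" "(\<Union>i. A i) = space \<nu>"
      "\<And>i. emeasure \<nu> (A i) \<noteq> \<infinity>"
    using sigma_finite_measure.sigma_finite by metis
  have "\<forall>i. \<exists>UA. UA \<subseteq> U \<and> countable UA \<and> emeasure \<nu> (A i) = emeasure \<nu> (A i - zero_cyl UA \<nu>)"
    using H A(1) by auto
  then obtain V where V: "\<And>i. V i \<subseteq> U" "\<And>i. countable (V i)"
      "\<And>i. emeasure \<nu> (A i) = emeasure \<nu> (A i - zero_cyl (V i) \<nu>)"
    by metis
  have null: "emeasure \<nu> (A i \<inter> zero_cyl (V i) \<nu>) = 0" for i
  proof -
    have s1: "A i \<in> sets \<nu>" using A(1) by auto
    have s2: "zero_cyl (V i) \<nu> \<in> sets \<nu>" using zero_cyl_sets[OF V(2) V(1) assms(2)] .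
    have "emeasure \<nu> (A i \<inter> zero_cyl (V i) \<nu>) + emeasure \<nu> (A i - zero_cyl (V i) \<nu>) = emeasure \<nu> (A i)"
      by (subst plus_emeasure) (use s1 s2 in \<open>auto intro: arg_cong[where f="emeasure \<nu>"]\<close>)
    then have "emeasure \<nu> (A i \<inter> zero_cyl (V i) \<nu>) + emeasure \<nu> (A i) = 0 + emeasure \<nu> (A i)"
      using V(3)[of i] by simp
    then show ?thesis using A(3)[of i] by (metis add.commute ennreal_add_left_cancel)
  qed
  define U0 where "U0 = (\<Union>i. V i)"
  have U0: "U0 \<subseteq> U" "countable U0" using V unfolding U0_def by auto
  have "zero_cyl U0 \<nu> = (\<Union>i. A i \<inter> zero_cyl U0 \<nu>)"
    using A(2) by (auto simp: zero_cyl_def)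
  also have "emeasure \<nu> \<dots> = 0"
  proof (rule emeasure_UN_eq_0)
    fix i
    have "emeasure \<nu> (A i \<inter> zero_cyl U0 \<nu>) \<le> emeasure \<nu> (A i \<inter> zero_cyl (V i) \<nu>)"
      apply (rule emeasure_mono)
      using zero_cyl_sets[OF V(2) V(1) assms(2)] A(1) by (auto simp: zero_cyl_def U0_def)
    then show "emeasure \<nu> (A i \<inter> zero_cyl U0 \<nu>) = 0" using null[of i] by simp
  next
    show "range (\<lambda>i. A i \<inter> zero_cyl U0 \<nu>) \<subseteq> sets \<nu>"
      using zero_cyl_sets[OF U0(2,1) assms(2)] A(1) by auto
  qed
  finally show "does_not_charge_zero U \<nu>"
    using U0 by (auto simp: does_not_charge_zero_def)
qed

end
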